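(* Let $f_\bullet\colon X\to Z$ be a non-expansive map between finite metric spaces and $f\colon V\to U$ the induced persistence morphism, $V=\mathrm{PH}_0(X)$, $U=\mathrm{PH}_0(Z)$. Then the block function $\mathcal{M}^0_f$ induces a unique partial matching $\sigma^f\colon\mathrm{Rep}\,\mathcal{B}(V)\nrightarrow\mathrm{Rep}\,\mathcal{B}(U)$; that is, $\sum_{b}\mathcal{M}^0_f(a,b)\le m^V(a)$ for every $a\in S^V$ and $\sum_a\mathcal{M}^0_f(a,b)\le m^U(b)$ for every $b\in S^U$, so that there is a (canonical) partial matching matching exactly $\mathcal{M}^0_f(a,b)$ copies of the bar $[0,a)$ with copies of the bar $[0,b)$ for all $a,b$.
   Context: All vector spaces are over $\mathbb{Z}_2$. A map $f_\bullet\colon X\to Z$ is non-expansive if $d^Z(f_\bullet(x),f_\bullet(y))\le d^X(x,y)$. For a finite metric space $X$ and $r\ge0$, $\mathrm{VR}_r(X)$ is the graph on $X$ with edges $[x,y]$ for $d^X(x,y)\le r$; $\mathrm{PH}_0(X)$ is the persistence module $r\mapsto H_0(\mathrm{VR}_r(X))$ (free on connected components) with structure maps $\rho_{rs}$ induced by inclusion; a non-expansive map induces graph maps $\mathrm{VR}_r(X)\to\mathrm{VR}_r(Z)$ and hence a persistence morphism $f$. The barcode $\mathcal{B}(V)=(S^V,m^V)$ is the multiset of finite death values $b>0$ of the bars $[0,b)$ of $V$ (infinite bar excluded), with multiplicities $m^V(b)$. For a multiset $(S,m)$, $\mathrm{Rep}(S,m)=\{(s,\ell): s\in S,\ 1\le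 \ell\le m(s)\}$. A partial matching $\mathrm{Rep}(S,m)\nrightarrow \mathrm{Rep}(S',m')$ is a bijection between subsets of the two representations. With $\ker^+_b(U)=\ker(\rho^U_{0b})$, $\ker^-_b(U)=\bigcup_{0\le r<b}\ker(\rho^U_{0r})$ and $f_0$ the degree-0 component of $f$, $\mathcal{M}^0_f(a,b)=\dim\frac{f_0(\ker^+_a V)\cap \ker^+_b U}{f_0(\ker^-_a V)\cap\ker^+_b U+f_0(\ker^+_a V)\cap \ker^-_b U}$ for $a,b>0$. *)

theory Defs
  imports Complex_Main "HOL-Library.Function_Algebras" "HOL-Library.Z2"
begin

definition finite_metric_space :: "'a set \<Rightarrow> ('a \<Rightarrow> 'a \<Rightarrow> real) \<Rightarrow> bool" where
  "finite_metric_space X d \<longleftrightarrow> finite X \<and>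
     (\<forall>x\<in>X. \<forall>y\<in>X. d x y \<ge> 0 \<and> (d x y = 0 \<longleftrightarrow> x = y) \<and> d x y = d y x) \<and>
     (\<forall>x\<in>X. \<forall>y\<in>X. \<forall>z\<in>X. d x z \<le> d x y + d y z)"

definition non_expansive ::
  "'a set \<Rightarrow> ('a \<Rightarrow> 'a \<Rightarrow> real) \<Rightarrow> 'b set \<Rightarrow> ('b \<Rightarrow> 'b \<Rightarrow> real) \<Rightarrow> ('a \<Rightarrow> 'b) \<Rightarrow> bool" where
  "non_expansive X dX Z dZ f \<longleftrightarrow> f ` X \<subseteq> Z \<and> (\<forall>x\<in>X. \<forall>y\<in>X. dZ (f x) (f y) \<le> dX x y)"

definition bscale :: "bit \<Rightarrow> ('a \<Rightarrow> bit) \<Rightarrow> ('a \<Rightarrow> bit)" where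
  "bscale c v = (\<lambda>x. c * v x)"

definition bdim :: "('a \<Rightarrow> bit) set \<Rightarrow> nat" where
  "bdim W = vector_space.dim bscale W"

text \<open>dimension of the quotient A / (B + C) of subspaces (B, C contained in A)\<close>
definition quot_dim :: "('a \<Rightarrow> bit) set \<Rightarrow> ('a \<Rightarrow> bit) set \<Rightarrow> ('a \<Rightarrow> bit) set \<Rightarrow> nat" where
  "quot_dim A B C = bdim A - bdim {b + c | b c. b \<in> B \<and> c \<in> C}"

definition vr_edges :: "'a set \<Rightarrow> ('a \<Rightarrow> 'a \<Rightarrow> real) \<Rightarrow> real \<Rightarrow> ('a \<times> 'a) set" where
  "vr_edges X d r = {(x, y). x \<in> X \<and> y \<in> X \<and> d x y \<le> r}"

definition vr_comps :: "'a set \<Rightarrow> ('a \<Rightarrow> 'a \<Rightarrow> real) \<Rightarrow> real \<Rightarrow> 'a set set" where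
  "vr_comps X d r = {{y \<in> X. (x, y) \<in> (vr_edges X d r)\<^sup>*} | x. x \<in> X}"

text \<open>H_0(VR_0(X)) is identified with Z_2^X (components of VR_0(X) are the points of X)\<close>
definition chains0 :: "'a set \<Rightarrow> ('a \<Rightarrow> bit) set" where
  "chains0 X = {v. \<forall>x. x \<notin> X \<longrightarrow> v x = 0}"

text \<open>structure map rho_{0r} : H_0(VR_0 X) -> H_0(VR_r X) (free on components)\<close>
definition rho0 :: "'a set \<Rightarrow> ('a \<Rightarrow> 'a \<Rightarrow> real) \<Rightarrow> real \<Rightarrow> ('a \<Rightarrow> bit) \<Rightarrow> ('a set \<Rightarrow> bit)" where
  "rho0 X d r v = (\<lambda>C. if C \<in> vr_comps X d r then (\<Sum>x\<in>C. v x) else 0)"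

definition ker_plus :: "'a set \<Rightarrow> ('a \<Rightarrow> 'a \<Rightarrow> real) \<Rightarrow> real \<Rightarrow> ('a \<Rightarrow> bit) set" where
  "ker_plus X d b = {v \<in> chains0 X. rho0 X d b v = 0}"

definition ker_minus :: "'a set \<Rightarrow> ('a \<Rightarrow> 'a \<Rightarrow> real) \<Rightarrow> real \<Rightarrow> ('a \<Rightarrow> bit) set" where
  "ker_minus X d b = (\<Union>r\<in>{0..<b}. ker_plus X d r)"

definition push0 :: "'a set \<Rightarrow> ('a \<Rightarrow> 'b) \<Rightarrow> ('a \<Rightarrow> bit) \<Rightarrow> ('b \<Rightarrow> bit)" where
  "push0 X f v = (\<lambda>z. \<Sum>x\<in>{x \<in> X. f x = z}. v x)"

definition bar_mult :: "'a set \<Rightarrow> ('a \<Rightarrow> 'a \<Rightarrow> real) \<Rightarrow> real \<Rightarrow> nat" where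
  "bar_mult X d b = (if b > 0 then bdim (ker_plus X d b) - bdim (ker_minus X d b) else 0)"

definition bar_set :: "'a set \<Rightarrow> ('a \<Rightarrow> 'a \<Rightarrow> real) \<Rightarrow> real set" where
  "bar_set X d = {b. b > 0 \<and> bar_mult X d b > 0}"

definition Rep :: "real set \<Rightarrow> (real \<Rightarrow> nat) \<Rightarrow> (real \<times> nat) set" where
  "Rep S m = {(s, l). s \<in> S \<and> 1 \<le> l \<and> l \<le> m s}"

definition partial_matching :: "('p \<times> 'q) set \<Rightarrow> 'p set \<Rightarrow> 'q set \<Rightarrow> bool" where
  "partial_matching \<sigma> P Q \<longleftrightarrow> \<sigma> \<subseteq> P \<times> Q \<and>
     (\<forall>p q q'. (p, q) \<in> \<sigma> \<and> (p, q') \<in> \<sigma> \<longrightarrow> q = q') \<and>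
     (\<forall>p p' q. (p, q) \<in> \<sigma> \<and> (p', q) \<in> \<sigma> \<longrightarrow> p = p')"

definition block_M0 ::
  "'a set \<Rightarrow> ('a \<Rightarrow> 'a \<Rightarrow> real) \<Rightarrow> 'b set \<Rightarrow> ('b \<Rightarrow> 'b \<Rightarrow> real) \<Rightarrow> ('a \<Rightarrow> 'b) \<Rightarrow> real \<Rightarrow> real \<Rightarrow> nat" where
  "block_M0 X dX Z dZ f a b =
     quot_dim (push0 X f ` ker_plus X dX a \<inter> ker_plus Z dZ b)
              (push0 X f ` ker_minus X dX a \<inter> ker_plus Z dZ b)
              (push0 X f ` ker_plus X dX a \<inter> ker_minus Z dZ b)"

end

theory Submission
  imports Defs
begin

lemma bit_cases2: "(c::bit) = 0 \<or> c = 1" by (cases c) auto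

lemma vs_bscale: "vector_space bscale"
  unfolding vector_space_def bscale_def by (auto simp: fun_eq_iff algebra_simps)

interpretation V: vector_space bscale by (rule vs_bscale)

definition subsp :: "('a \<Rightarrow> bit) set \<Rightarrow> bool" where
  "subsp W \<longleftrightarrow> 0 \<in> W \<and> (\<forall>x\<in>W. \<forall>y\<in>W. x + y \<in> W)"

lemma bscale_01: "bscale 0 x = 0" "bscale 1 x = x"
  by (auto simp: bscale_def fun_eq_iff)

lemma subsp_subspace: assumes "subsp W" shows "V.subspace W"
proof (rule V.subspaceI)
  show "0 \<in> W" using assms by (simp add: subsp_def)
  show "x + y \<in> W" if "x \<in> W" "y \<in> W" for x y using assms that by (simp add: subsp_def)
  show "bscale c x \<in> W" if "x \<in> W" for c x
    using bit_cases2[of c] assms that by (auto simp: subsp_def bscale_01)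
qed

lemma neg_fun_bit: "- (x :: 'a \<Rightarrow> bit) = x"
  by (auto simp: fun_eq_iff)

lemma minus_fun_bit: "(x :: 'a \<Rightarrow> bit) - y = x + y"
  by (auto simp: fun_eq_iff)

lemma span_insert_bit:
  "V.span (insert a S) = V.span S \<union> (\<lambda>y. y + a) ` V.span S"
proof -
  have "V.span (insert a S) = {x. \<exists>k. (x - bscale k a) \<in> V.span S}"
    by (rule V.span_insert)
  also have "\<dots> = V.span S \<union> (\<lambda>y. y + a) ` V.span S"
  proof (intro set_eqI iffI)
    fix x assume "x \<in> {x. \<exists>k. (x - bscale k a) \<in> V.span S}"
    then obtain k where k: "x - bscale k a \<in> V.span S" by auto
    show "x \<in> V.span S \<union> (\<lambda>y. y + a) ` V.span S"
    proof (cases "k = 0")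
      case True then show ?thesis using k by (simp add: bscale_01)
    next
      case False then have "k = 1" by simp
      then have "x + a \<in> V.span S" using k by (simp add: bscale_01 minus_fun_bit)
      moreover have "x = (x + a) + a" by (auto simp: fun_eq_iff)
      ultimately show ?thesis by blast
    qed
  next
    fix x assume "x \<in> V.span S \<union> (\<lambda>y. y + a) ` V.span S"
    then show "x \<in> {x. \<exists>k. (x - bscale k a) \<in> V.span S}"
    proof
      assume "x \<in> V.span S" then show ?thesis by (intro CollectI exI[of _ 0]) (simp add: bscale_01)
    next
      assume "x \<in> (\<lambda>y. y + a) ` V.span S"
      then obtain y where y: "y \<in> V.span S" "x = y + a" by auto
      then have "x - bscale 1 a = y" by (simp add: bscale_01)
      with y have "x - bscale 1 a \<in> V.span S" by simp
      then show ?thesis by (intro CollectI exI[of _ 1])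
    qed
  qed
  finally show ?thesis .
qed

lemma card_span_indep:
  assumes "finite B" "V.independent B"
  shows "finite (V.span B) \<and> card (V.span B) = 2 ^ card B"
  using assms
proof (induction B rule: finite_induct)
  case empty
  show ?case by simp
next
  case (insert a B)
  have ind: "V.independent B" and na: "a \<notin> V.span B"
    using insert.prems insert.hyps(2) V.independent_insert[of a B] by simp_all
  from insert.IH[OF ind] have fin: "finite (V.span B)" and c: "card (V.span B) = 2 ^ card B" by auto
  have disj: "V.span B \<inter> (\<lambda>y. y + a) ` V.span B = {}"
  proof (rule ccontr)
    assume "V.span B \<inter> (\<lambda>y. y + a) ` V.span B \<noteq> {}"
    then obtain y where y: "y \<in> V.span B" "y + a \<in> V.span B" by auto
    then have "(y + a) + y \<in> V.span B" by (rule V.span_add[rotated])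
    moreover have "(y + a) + y = a" by (auto simp: fun_eq_iff)
    ultimately show False using na by simp
  qed
  have inj: "inj_on (\<lambda>y. y + a) (V.span B)" by (rule inj_onI) simp
  have "card (V.span (insert a B)) = card (V.span B) + card ((\<lambda>y. y + a) ` V.span B)"
    unfolding span_insert_bit using fin disj by (intro card_Un_disjoint) auto
  also have "\<dots> = 2 * card (V.span B)" using card_image[OF inj] by simp
  finally have "card (V.span (insert a B)) = 2 ^ card (insert a B)"
    using c insert.hyps by simp
  moreover have "finite (V.span (insert a B))" unfolding span_insert_bit using fin by blast
  ultimately show ?case by blast
qed

lemma card_subsp:
  assumes "finite W" "subsp W"
  shows "card W = 2 ^ bdim W"
proof -
  obtain B where B: "B \<subseteq> W" "V.independent B" "W \<subseteq> V.span B" "card B = V.dim W"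
    using V.basis_exists by blast
  have "V.span B = W" using B subsp_subspace[OF assms(2)] V.span_subspace by blast
  moreover have "finite B" using B assms(1) finite_subset by blast
  ultimately show ?thesis using card_span_indep[of B] B by (simp add: bdim_def)
qed

lemma fiber_count:
  assumes "finite G" "\<And>y. y \<in> h ` G \<Longrightarrow> card {x\<in>G. h x = y} = k"
  shows "card G = card (h ` G) * k"
proof -
  have G: "G = (\<Union>y\<in>h ` G. {x\<in>G. h x = y})" by auto
  have "card G = (\<Sum>y\<in>h ` G. card {x\<in>G. h x = y})"
    by (subst G, rule card_UN_disjoint) (use assms in auto)
  also have "\<dots> = (\<Sum>y\<in>h ` G. k)" using assms(2) by simp
  finally show ?thesis by simp
qed

lemma bit_pp1: "(x :: 'a \<Rightarrow> bit) + x = 0" by (auto simp: fun_eq_iff)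
lemma bit_pp2: "(x :: 'a \<Rightarrow> bit) + (x + y) = y" by (auto simp: fun_eq_iff)
lemma bit_pp3: "(y :: 'a \<Rightarrow> bit) + x + x = y" by (auto simp: fun_eq_iff)
lemma bit_eq_swap: "((x :: 'a \<Rightarrow> bit) + y = z) \<longleftrightarrow> (x = z + y)" by (auto simp: fun_eq_iff)

definition ssum :: "('a \<Rightarrow> bit) set \<Rightarrow> ('a \<Rightarrow> bit) set \<Rightarrow> ('a \<Rightarrow> bit) set" where
  "ssum U W = {x + y | x y. x \<in> U \<and> y \<in> W}"

lemma ssum_image: "ssum U W = (\<lambda>p. fst p + snd p) ` (U \<times> W)"
  unfolding ssum_def by force

lemma finite_ssum: "finite U \<Longrightarrow> finite W \<Longrightarrow> finite (ssum U W)"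
  unfolding ssum_image by simp

lemma subsp_ssum: assumes "subsp U" "subsp W" shows "subsp (ssum U W)"
  unfolding subsp_def
proof (intro conjI ballI)
  show "0 \<in> ssum U W" using assms unfolding subsp_def ssum_def by force
  fix x y assume "x \<in> ssum U W" "y \<in> ssum U W"
  then obtain u1 w1 u2 w2 where "x = u1 + w1" "y = u2 + w2" "u1 \<in> U" "u2 \<in> U" "w1 \<in> W" "w2 \<in> W"
    unfolding ssum_def by auto
  moreover have "u1 + w1 + (u2 + w2) = (u1 + u2) + (w1 + w2)" by (simp add: algebra_simps)
  ultimately show "x + y \<in> ssum U W" using assms unfolding subsp_def ssum_def by blast
qed

lemma subsp_Int: "subsp U \<Longrightarrow> subsp W \<Longrightarrow> subsp (U \<inter> W)"
  unfolding subsp_def by auto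

lemma ssum_sub: "subsp W \<Longrightarrow> U \<subseteq> W \<Longrightarrow> V \<subseteq> W \<Longrightarrow> ssum U V \<subseteq> W"
  unfolding subsp_def ssum_def by auto

lemma ssum_sup1: assumes "subsp V" shows "U \<subseteq> ssum U V"
proof
  fix x assume "x \<in> U"
  moreover have "x = x + 0" by simp
  ultimately show "x \<in> ssum U V" using assms unfolding subsp_def ssum_def by blast
qed

lemma ssum_sup2: assumes "subsp U" shows "V \<subseteq> ssum U V"
proof
  fix x assume "x \<in> V"
  moreover have "x = 0 + x" by simp
  ultimately show "x \<in> ssum U V" using assms unfolding subsp_def ssum_def by blast
qed

lemma ssum_mono: "U \<subseteq> U' \<Longrightarrow> V \<subseteq> V' \<Longrightarrow> ssum U V \<subseteq> ssum U' V'"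
  unfolding ssum_def by blast

lemma dim_mono:
  assumes "U \<subseteq> W" "finite W" "subsp U" "subsp W"
  shows "bdim U \<le> bdim W"
proof -
  have "finite U" using assms finite_subset by blast
  have "card U \<le> card W" using assms card_mono by blast
  then have "(2::nat) ^ bdim U \<le> 2 ^ bdim W"
    using card_subsp[OF \<open>finite U\<close> assms(3)] card_subsp[OF assms(2) assms(4)] by simp
  then show ?thesis by simp
qed

lemma subsp_eq_dim:
  assumes "U \<subseteq> W" "finite W" "subsp U" "subsp W" "bdim U = bdim W"
  shows "U = W"
proof -
  have "finite U" using assms finite_subset by blast
  have "card U = card W"
    using card_subsp[OF \<open>finite U\<close> assms(3)] card_subsp[OF assms(2) assms(4)] assms(5) by simp
  then show ?thesis using assms(1,2) card_subset_eq by blast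
qed

lemma grassmann_card:
  assumes "finite U" "finite W" "subsp U" "subsp W"
  shows "card (ssum U W) * card (U \<inter> W) = card U * card W"
proof -
  let ?h = "\<lambda>p. fst p + snd p"
  have "card (U \<times> W) = card (?h ` (U \<times> W)) * card (U \<inter> W)"
  proof (rule fiber_count)
    show "finite (U \<times> W)" using assms by simp
    fix s assume "s \<in> ?h ` (U \<times> W)"
    then obtain u0 w0 where uw: "u0 \<in> U" "w0 \<in> W" "s = u0 + w0" by auto
    have "bij_betw (\<lambda>p. fst p + u0) {x \<in> U \<times> W. ?h x = s} (U \<inter> W)"
    proof (rule bij_betw_byWitness[where f' = "\<lambda>t. (t + u0, t + w0)"])
      show "\<forall>a\<in>{x \<in> U \<times> W. ?h x = s}. (fst a + u0 + u0, fst a + u0 + w0) = a"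
      proof
        fix a assume a: "a \<in> {x \<in> U \<times> W. ?h x = s}"
        obtain u w where "a = (u, w)" by (cases a)
        with a uw have "u + w = u0 + w0" by simp
        then have "w = u + (u0 + w0)" by (metis bit_pp2)
        then have "w = u + u0 + w0" by (simp add: add.assoc)
        then show "(fst a + u0 + u0, fst a + u0 + w0) = a" using \<open>a = (u, w)\<close> by (simp add: bit_pp3)
      qed
      show "\<forall>a'\<in>U \<inter> W. fst (a' + u0, a' + w0) + u0 = a'" by (simp add: bit_pp3)
      show "(\<lambda>p. fst p + u0) ` {x \<in> U \<times> W. ?h x = s} \<subseteq> U \<inter> W"
      proof
        fix t assume "t \<in> (\<lambda>p. fst p + u0) ` {x \<in> U \<times> W. ?h x = s}"
        then obtain u w where "u \<in> U" "w \<in> W" "u + w = u0 + w0" "t = u + u0" using uw by auto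
        moreover have "t = w + w0"
        proof -
          have "w = u + (u0 + w0)" using \<open>u + w = u0 + w0\<close> by (metis bit_pp2)
          then have "w + w0 = u + u0" by (simp add: add.assoc[symmetric] bit_pp3)
          then show ?thesis using \<open>t = u + u0\<close> by simp
        qed
        ultimately have "u + u0 \<in> U" "w + w0 \<in> W" "t = u + u0" "t = w + w0"
          using assms(3,4) uw unfolding subsp_def by blast+
        then show "t \<in> U \<inter> W" by simp
      qed
      show "(\<lambda>t. (t + u0, t + w0)) ` (U \<inter> W) \<subseteq> {x \<in> U \<times> W. ?h x = s}"
      proof
        fix p assume "p \<in> (\<lambda>t. (t + u0, t + w0)) ` (U \<inter> W)"
        then obtain t where t: "t \<in> U" "t \<in> W" "p = (t + u0, t + w0)" by auto
        have "t + u0 + (t + w0) = u0 + w0" by (auto simp: fun_eq_iff)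
        then show "p \<in> {x \<in> U \<times> W. ?h x = s}" using t uw assms unfolding subsp_def by auto
      qed
    qed
    then show "card {x \<in> U \<times> W. ?h x = s} = card (U \<inter> W)" by (rule bij_betw_same_card)
  qed
  then show ?thesis by (simp add: ssum_image card_cartesian_product)
qed

lemma pow2_inj: "(2::nat) ^ a = 2 ^ b \<Longrightarrow> a = b" by simp

lemma grassmann:
  assumes "finite U" "finite W" "subsp U" "subsp W"
  shows "bdim (ssum U W) + bdim (U \<inter> W) = bdim U + bdim W"
proof -
  have "(2::nat) ^ (bdim (ssum U W) + bdim (U \<inter> W)) = 2 ^ (bdim U + bdim W)"
    using grassmann_card[OF assms]
      card_subsp[OF finite_ssum[OF assms(1,2)] subsp_ssum[OF assms(3,4)]]
      card_subsp[of "U \<inter> W"] card_subsp[OF assms(1,3)] card_subsp[OF assms(2,4)] assms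
    by (simp add: power_add subsp_Int)
  then show ?thesis by simp
qed

definition additive :: "(('a \<Rightarrow> bit) \<Rightarrow> ('b \<Rightarrow> bit)) \<Rightarrow> bool" where
  "additive g \<longleftrightarrow> (\<forall>x y. g (x + y) = g x + g y)"

lemma additive_0: "additive g \<Longrightarrow> g 0 = 0"
  unfolding additive_def by (metis add_cancel_right_right)

lemma subsp_image: assumes "additive g" "subsp T" shows "subsp (g ` T)"
  unfolding subsp_def
proof (intro conjI ballI)
  show "0 \<in> g ` T" using assms additive_0[OF assms(1)] unfolding subsp_def by force
  fix x y assume "x \<in> g ` T" "y \<in> g ` T"
  then obtain a b where "a \<in> T" "b \<in> T" "x = g a" "y = g b" by auto
  then show "x + y \<in> g ` T" using assms unfolding subsp_def additive_def
    by (metis image_eqI)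
qed

lemma image_card:
  assumes "additive g" "finite T" "subsp T"
  shows "card T = card (g ` T) * card {t\<in>T. g t = 0}"
proof (rule fiber_count[OF assms(2)])
  fix y assume "y \<in> g ` T"
  then obtain t0 where t0: "t0 \<in> T" "y = g t0" by auto
  have "bij_betw (\<lambda>t. t + t0) {x \<in> T. g x = y} {t\<in>T. g t = 0}"
  proof (rule bij_betw_byWitness[where f' = "\<lambda>t. t + t0"])
    show "\<forall>a\<in>{x \<in> T. g x = y}. a + t0 + t0 = a" by (simp add: bit_pp3)
    show "\<forall>a\<in>{t \<in> T. g t = 0}. a + t0 + t0 = a" by (simp add: bit_pp3)
    show "(\<lambda>t. t + t0) ` {x \<in> T. g x = y} \<subseteq> {t \<in> T. g t = 0}"
      using assms t0 unfolding subsp_def additive_def by (auto simp: bit_pp1)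
    show "(\<lambda>t. t + t0) ` {t \<in> T. g t = 0} \<subseteq> {x \<in> T. g x = y}"
      using assms t0 unfolding subsp_def additive_def by auto
  qed
  then show "card {x \<in> T. g x = y} = card {t\<in>T. g t = 0}" by (rule bij_betw_same_card)
qed

lemma image_dim:
  assumes "additive g" "finite T" "subsp T" "subsp S" "S \<subseteq> T"
  shows "bdim (g ` T) + bdim S \<le> bdim (g ` S) + bdim T"
proof -
  have fS: "finite S" using assms finite_subset by blast
  have cT: "card T = card (g ` T) * card {t\<in>T. g t = 0}" by (rule image_card[OF assms(1-3)])
  have cS: "card S = card (g ` S) * card {t\<in>S. g t = 0}" by (rule image_card[OF assms(1) fS assms(4)])
  have k: "card {t\<in>S. g t = 0} \<le> card {t\<in>T. g t = 0}"
    using assms by (intro card_mono) auto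
  have "card (g ` T) * card S \<le> card (g ` S) * card T"
    unfolding cS cT using k by (simp add: algebra_simps)
  moreover have "card (g ` T) = 2 ^ bdim (g ` T)"
    using card_subsp[OF _ subsp_image[OF assms(1,3)]] assms by simp
  moreover have "card (g ` S) = 2 ^ bdim (g ` S)"
    using card_subsp[OF _ subsp_image[OF assms(1,4)]] fS by simp
  moreover have "card S = 2 ^ bdim S" using card_subsp[OF fS assms(4)] .
  moreover have "card T = 2 ^ bdim T" using card_subsp[OF assms(2,3)] .
  ultimately have "(2::nat) ^ (bdim (g ` T) + bdim S) \<le> 2 ^ (bdim (g ` S) + bdim T)"
    by (simp add: power_add)
  then show ?thesis by simp
qed

declare add_bit_eq_xor[simp del] mult_bit_eq_and[simp del]

lemma finite_chains0: assumes "finite X" shows "finite (chains0 X)"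
proof -
  have "chains0 X \<subseteq> (\<lambda>S x. if x \<in> S then 1 else 0) ` Pow X"
  proof
    fix v assume v: "v \<in> chains0 X"
    have "v = (\<lambda>x. if x \<in> {x\<in>X. v x = 1} then 1 else 0)"
    proof
      fix x show "v x = (if x \<in> {x\<in>X. v x = 1} then 1 else 0)"
        using v unfolding chains0_def by (cases "v x") auto
    qed
    then show "v \<in> (\<lambda>S x. if x \<in> S then 1 else 0) ` Pow X" by blast
  qed
  then show ?thesis using assms finite_subset by blast
qed

lemma subsp_chains0: "subsp (chains0 X)"
  unfolding subsp_def chains0_def by auto

lemma rho0_add: "rho0 X d r (v + w) = rho0 X d r v + rho0 X d r w"
  unfolding rho0_def by (auto simp: fun_eq_iff sum.distrib)

lemma rho0_zero: "rho0 X d r 0 = 0"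
  unfolding rho0_def by (auto simp: fun_eq_iff)

lemma subsp_ker_plus: "subsp (ker_plus X d r)"
  unfolding subsp_def ker_plus_def using subsp_chains0[of X]
  by (auto simp: rho0_add rho0_zero subsp_def)

lemma ker_plus_sub: "ker_plus X d r \<subseteq> chains0 X"
  unfolding ker_plus_def by auto

lemma finite_ker_plus: "finite X \<Longrightarrow> finite (ker_plus X d r)"
  using finite_chains0 ker_plus_sub finite_subset by metis

definition cls :: "'a set \<Rightarrow> ('a \<Rightarrow> 'a \<Rightarrow> real) \<Rightarrow> real \<Rightarrow> 'a \<Rightarrow> 'a set" where
  "cls X d r x = {y \<in> X. (x, y) \<in> (vr_edges X d r)\<^sup>*}"

lemma vr_comps_cls: "vr_comps X d r = cls X d r ` X"
  unfolding vr_comps_def cls_def by auto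

lemma fm_sym: "finite_metric_space X d \<Longrightarrow> x \<in> X \<Longrightarrow> y \<in> X \<Longrightarrow> d x y = d y x"
  unfolding finite_metric_space_def by blast

lemma fm_fin: "finite_metric_space X d \<Longrightarrow> finite X"
  unfolding finite_metric_space_def by blast

lemma sym_edges:
  assumes "finite_metric_space X d" shows "sym (vr_edges X d r)"
proof (rule symI)
  fix x y assume "(x, y) \<in> vr_edges X d r"
  then have "x \<in> X" "y \<in> X" "d x y \<le> r" unfolding vr_edges_def by auto
  moreover have "d y x = d x y" using fm_sym[OF assms] calculation by blast
  ultimately show "(y, x) \<in> vr_edges X d r" unfolding vr_edges_def by simp
qed

lemma cls_eq:
  assumes "finite_metric_space X d" "y \<in> cls X d r x"
  shows "cls X d r y = cls X d r x"
proof -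
  let ?R = "(vr_edges X d r)\<^sup>*"
  have s: "sym ?R" using sym_rtrancl[OF sym_edges[OF assms(1)]] .
  have xy: "(x, y) \<in> ?R" using assms(2) unfolding cls_def by auto
  then have yx: "(y, x) \<in> ?R" using s unfolding sym_def by blast
  show ?thesis
  proof (intro set_eqI iffI)
    fix z assume "z \<in> cls X d r y"
    then have "z \<in> X" "(y, z) \<in> ?R" unfolding cls_def by auto
    then show "z \<in> cls X d r x" unfolding cls_def using xy rtrancl_trans by fastforce
  next
    fix z assume "z \<in> cls X d r x"
    then have "z \<in> X" "(x, z) \<in> ?R" unfolding cls_def by auto
    then show "z \<in> cls X d r y" unfolding cls_def using yx rtrancl_trans by fastforce
  qed
qed

lemma cls_self: "x \<in> X \<Longrightarrow> x \<in> cls X d r x"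
  unfolding cls_def by auto

lemma cls_disj:
  assumes "finite_metric_space X d" "cls X d r x \<noteq> cls X d r y"
  shows "cls X d r x \<inter> cls X d r y = {}"
proof (rule ccontr)
  assume "cls X d r x \<inter> cls X d r y \<noteq> {}"
  then obtain z where "z \<in> cls X d r x" "z \<in> cls X d r y" by auto
  then have "cls X d r z = cls X d r x" "cls X d r z = cls X d r y" using cls_eq[OF assms(1)] by blast+
  then show False using assms(2) by simp
qed

lemma edges_mono: "r \<le> s \<Longrightarrow> vr_edges X d r \<subseteq> vr_edges X d s"
  unfolding vr_edges_def by (auto intro: order_trans)

lemma cls_mono:
  assumes "r \<le> s" shows "cls X d r x \<subseteq> cls X d s x"
proof
  fix y assume "y \<in> cls X d r x"
  then have y: "y \<in> X" "(x, y) \<in> (vr_edges X d r)\<^sup>*" unfolding cls_def by simp_all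
  have "(x, y) \<in> (vr_edges X d s)\<^sup>*" using rtrancl_mono[OF edges_mono[OF assms]] y(2) by (rule subsetD)
  then show "y \<in> cls X d s x" using y(1) unfolding cls_def by simp
qed

lemma ker_plus_mono:
  assumes fm: "finite_metric_space X d" and rs: "r \<le> s"
  shows "ker_plus X d r \<subseteq> ker_plus X d s"
proof
  fix v assume v: "v \<in> ker_plus X d r"
  have fX: "finite X" using fm_fin[OF fm] .
  have vr: "(\<Sum>y\<in>cls X d r x. v y) = 0" if "x \<in> X" for x
  proof -
    have "rho0 X d r v (cls X d r x) = 0" using v unfolding ker_plus_def by simp
    moreover have "cls X d r x \<in> vr_comps X d r" unfolding vr_comps_cls using that by (rule imageI)
    ultimately show ?thesis unfolding rho0_def by simp
  qed
  have "(\<Sum>y\<in>C. v y) = 0" if C: "C \<in> vr_comps X d s" for C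
  proof -
    have "C \<in> cls X d s ` X" using C unfolding vr_comps_cls .
    then obtain x0 where x0: "x0 \<in> X" "C = cls X d s x0" by (rule imageE) simp
    let ?P = "cls X d r ` C"
    have CX: "C \<subseteq> X" using x0 unfolding cls_def by blast
    have U: "\<Union>?P = C"
    proof
      show "\<Union>?P \<subseteq> C"
      proof
        fix z assume "z \<in> \<Union>?P"
        then obtain y where y: "y \<in> C" "z \<in> cls X d r y" by auto
        have "z \<in> cls X d s y" using y(2) cls_mono[OF rs, of X d y] by (rule rev_subsetD)
        moreover have "y \<in> cls X d s x0" using y(1) x0(2) by simp
        then have "cls X d s y = cls X d s x0" by (rule cls_eq[OF fm])
        ultimately show "z \<in> C" using x0(2) by simp
      qed
      show "C \<subseteq> \<Union>?P"
      proof
        fix y assume "y \<in> C"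
        then have "y \<in> cls X d r y" "cls X d r y \<in> ?P" using CX cls_self[of y X d r] by auto
        then show "y \<in> \<Union>?P" by (rule UnionI[rotated])
      qed
    qed
    have "(\<Sum>y\<in>C. v y) = (\<Sum>y\<in>\<Union>?P. v y)" using U by (rule arg_cong[symmetric])
    also have "\<dots> = (\<Sum>D\<in>?P. \<Sum>y\<in>D. v y)"
    proof (rule sum.Union_disjoint[simplified])
      show "\<forall>A\<in>?P. finite A" using fX unfolding cls_def by simp
      show "\<forall>A\<in>?P. \<forall>B\<in>?P. A \<noteq> B \<longrightarrow> A \<inter> B = {}" using cls_disj[OF fm] by blast
    qed
    also have "\<dots> = 0"
    proof (rule sum.neutral, rule ballI)
      fix D assume "D \<in> ?P"
      then obtain y where "y \<in> C" "D = cls X d r y" by blast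
      moreover have "y \<in> X" using \<open>y \<in> C\<close> CX by blast
      ultimately show "(\<Sum>y\<in>D. v y) = 0" using vr by simp
    qed
    finally show ?thesis .
  qed
  then have "rho0 X d s v = 0" unfolding rho0_def by (simp add: fun_eq_iff)
  moreover have "v \<in> chains0 X" using v unfolding ker_plus_def by simp
  ultimately show "v \<in> ker_plus X d s" unfolding ker_plus_def by simp
qed

lemma ker_minus_sub:
  assumes "finite_metric_space X d" "0 < b"
  shows "ker_minus X d b \<subseteq> ker_plus X d b"
proof
  fix v assume "v \<in> ker_minus X d b"
  then obtain r where r: "r \<in> {0..<b}" "v \<in> ker_plus X d r" unfolding ker_minus_def by (rule UN_E)
  have "ker_plus X d r \<subseteq> ker_plus X d b" using r(1) by (intro ker_plus_mono[OF assms(1)]) simp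
  then show "v \<in> ker_plus X d b" using r(2) by (rule subsetD)
qed

lemma ker_plus_sub_minus:
  assumes "finite_metric_space X d" "0 \<le> a" "a < b"
  shows "ker_plus X d a \<subseteq> ker_minus X d b"
proof
  fix v assume "v \<in> ker_plus X d a"
  moreover have "a \<in> {0..<b}" using assms by simp
  ultimately show "v \<in> ker_minus X d b" unfolding ker_minus_def by (rule UN_I[rotated])
qed

lemma subsp_ker_minus:
  assumes fm: "finite_metric_space X d" and b: "0 < b"
  shows "subsp (ker_minus X d b)"
  unfolding subsp_def
proof (intro conjI ballI)
  have "0 \<in> ker_plus X d 0" using subsp_ker_plus unfolding subsp_def by blast
  then show "0 \<in> ker_minus X d b" unfolding ker_minus_def using b by auto
  fix x y assume "x \<in> ker_minus X d b" "y \<in> ker_minus X d b"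
  then obtain r1 r2 where r: "0 \<le> r1" "r1 < b" "0 \<le> r2" "r2 < b"
    "x \<in> ker_plus X d r1" "y \<in> ker_plus X d r2"
    unfolding ker_minus_def by auto
  then have "x \<in> ker_plus X d (max r1 r2)" "y \<in> ker_plus X d (max r1 r2)"
    using ker_plus_mono[OF fm, of r1 "max r1 r2"] ker_plus_mono[OF fm, of r2 "max r1 r2"] by auto
  then have "x + y \<in> ker_plus X d (max r1 r2)" using subsp_ker_plus unfolding subsp_def by blast
  then show "x + y \<in> ker_minus X d b" unfolding ker_minus_def using r by auto
qed

lemma finite_ker_minus:
  assumes "finite_metric_space X d" "0 < b" shows "finite (ker_minus X d b)"
  using ker_minus_sub[OF assms] finite_ker_plus[OF fm_fin[OF assms(1)], of d b] finite_subset by blast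

lemma bar_mult_eq:
  "0 < b \<Longrightarrow> bar_mult X d b = bdim (ker_plus X d b) - bdim (ker_minus X d b)"
  unfolding bar_mult_def by simp

lemma bar_mult_zero_eq:
  assumes fm: "finite_metric_space X d" and b: "0 < b" and m: "bar_mult X d b = 0"
  shows "ker_minus X d b = ker_plus X d b"
proof (rule subsp_eq_dim)
  have fX: "finite X" using fm_fin[OF fm] .
  show "ker_minus X d b \<subseteq> ker_plus X d b" by (rule ker_minus_sub[OF fm b])
  show "finite (ker_plus X d b)" using finite_ker_plus[OF fX] .
  show "subsp (ker_minus X d b)" by (rule subsp_ker_minus[OF fm b])
  show "subsp (ker_plus X d b)" by (rule subsp_ker_plus)
  have "bdim (ker_minus X d b) \<le> bdim (ker_plus X d b)"
    by (rule dim_mono) (use ker_minus_sub[OF fm b] finite_ker_plus[OF fX] subsp_ker_minus[OF fm b] subsp_ker_plus in auto)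
  then show "bdim (ker_minus X d b) = bdim (ker_plus X d b)" using m b unfolding bar_mult_def by simp
qed

lemma bar_set_sub:
  assumes fm: "finite_metric_space X d"
  shows "bar_set X d \<subseteq> (\<lambda>p. d (fst p) (snd p)) ` (X \<times> X)"
proof
  fix b assume bs: "b \<in> bar_set X d"
  then have b: "0 < b" and m: "bar_mult X d b > 0" unfolding bar_set_def by auto
  let ?D = "(\<lambda>p. d (fst p) (snd p)) ` (X \<times> X)"
  have fX: "finite X" using fm_fin[OF fm] .
  show "b \<in> ?D"
  proof (rule ccontr)
    assume nb: "b \<notin> ?D"
    define r0 where "r0 = Max (insert 0 {t\<in>?D. t < b})"
    have fin: "finite (insert 0 {t\<in>?D. t < b})" using fX by simp
    have r0ge: "0 \<le> r0" unfolding r0_def using fin by simp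
    have r0lt: "r0 < b" unfolding r0_def using fin b by (subst Max_less_iff) auto
    have E: "vr_edges X d r0 = vr_edges X d b"
    proof
      show "vr_edges X d r0 \<subseteq> vr_edges X d b" using r0lt by (intro edges_mono) simp
      show "vr_edges X d b \<subseteq> vr_edges X d r0"
      proof
        fix p assume p: "p \<in> vr_edges X d b"
        then obtain x y where xy: "p = (x, y)" "x \<in> X" "y \<in> X" "d x y \<le> b" unfolding vr_edges_def by auto
        have inD: "d x y \<in> ?D" using xy by force
        then have "d x y \<noteq> b" using nb by auto
        then have "d x y \<in> insert 0 {t\<in>?D. t < b}" using xy inD by auto
        then have "d x y \<le> r0" unfolding r0_def using fin by simp
        then show "p \<in> vr_edges X d r0" using xy unfolding vr_edges_def by auto
      qed
    qed
    have "ker_plus X d r0 = ker_plus X d b"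
      unfolding ker_plus_def rho0_def vr_comps_def E ..
    then have "ker_plus X d b \<subseteq> ker_minus X d b"
      using ker_plus_sub_minus[OF fm r0ge r0lt] by simp
    then have "ker_minus X d b = ker_plus X d b" using ker_minus_sub[OF fm b] by blast
    then show False using m b unfolding bar_mult_def by simp
  qed
qed

lemma finite_bar_set:
  assumes "finite_metric_space X d" shows "finite (bar_set X d)"
proof -
  have "finite ((\<lambda>p. d (fst p) (snd p)) ` (X \<times> X))" using fm_fin[OF assms] by simp
  then show ?thesis using bar_set_sub[OF assms] finite_subset by blast
qed

lemma push0_additive: "additive (push0 X f)"
  unfolding additive_def push0_def by (auto simp: fun_eq_iff sum.distrib)

lemma telescope:
  fixes S :: "real set" and g h h' :: "real \<Rightarrow> nat"
  assumes "finite S"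
    and step: "\<And>b. b \<in> S \<Longrightarrow> g b + h' b \<le> h b"
    and mono: "\<And>b1 b2. b1 \<in> S \<Longrightarrow> b2 \<in> S \<Longrightarrow> b1 < b2 \<Longrightarrow> h b1 \<le> h' b2"
    and lo: "\<And>b. b \<in> S \<Longrightarrow> lo \<le> h' b"
    and hi: "\<And>b. b \<in> S \<Longrightarrow> h b \<le> hi"
    and lohi: "lo \<le> hi"
  shows "(\<Sum>b\<in>S. g b) + lo \<le> hi"
proof -
  have main: "A \<subseteq> S \<longrightarrow> A \<noteq> {} \<longrightarrow> (\<Sum>b\<in>A. g b) + lo \<le> h (Max A)" if "finite A" for A
    using that
  proof (induction A rule: finite_linorder_max_induct)
    case empty
    then show ?case by simp
  next
    case (insert b A)
    show ?case
    proof (intro impI)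
      assume sub: "insert b A \<subseteq> S"
      have bS: "b \<in> S" using sub by simp
      have bA: "b \<notin> A" using insert.hyps(2) by blast
      have mx: "Max (insert b A) = b"
        using insert.hyps by (intro Max_eqI) auto
      show "(\<Sum>b\<in>insert b A. g b) + lo \<le> h (Max (insert b A))"
      proof (cases "A = {}")
        case True
        then show ?thesis using step[OF bS] lo[OF bS] by simp
      next
        case False
        have IH: "(\<Sum>b\<in>A. g b) + lo \<le> h (Max A)" using insert.IH sub False by simp
        have "Max A \<in> A" using False insert.hyps(1) by simp
        then have "h (Max A) \<le> h' b" using mono[of "Max A" b] sub insert.hyps(2) bS by auto
        then show ?thesis using IH step[OF bS] mx bA insert.hyps(1) by simp
      qed
    qed
  qed
  show ?thesis
  proof (cases "S = {}")
    case True then show ?thesis using lohi by simp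
  next
    case False
    have "Max S \<in> S" using False assms(1) by simp
    then show ?thesis using main[OF assms(1)] False hi[of "Max S"] by simp
  qed
qed

lemma row_step:
  assumes fin: "finite P" "finite Lp" and sub: "subsp P" "subsp Q" "subsp Lp" "subsp Lm"
    and QP: "Q \<subseteq> P" and LL: "Lm \<subseteq> Lp"
  shows "(bdim (P \<inter> Lp) - bdim (ssum (Q \<inter> Lp) (P \<inter> Lm))) + bdim (ssum (P \<inter> Lm) Q)
         \<le> bdim (ssum (P \<inter> Lp) Q)"
proof -
  define A where "A = P \<inter> Lp"
  define B where "B = Q \<inter> Lp"
  define C where "C = P \<inter> Lm"
  have fQ: "finite Q" using fin QP finite_subset by blast
  have fA: "finite A" "finite B" "finite C" unfolding A_def B_def C_def using fin fQ by auto
  have sA: "subsp A" "subsp B" "subsp C" unfolding A_def B_def C_def using sub subsp_Int by auto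
  have AQ: "A \<inter> Q = B" unfolding A_def B_def using QP by blast
  have CQ: "C \<inter> Q = B \<inter> C" unfolding B_def C_def using QP LL by blast
  have g1: "bdim (ssum A Q) + bdim (A \<inter> Q) = bdim A + bdim Q" by (rule grassmann) (use fA fQ sA sub in auto)
  have g2: "bdim (ssum C Q) + bdim (C \<inter> Q) = bdim C + bdim Q" by (rule grassmann) (use fA fQ sA sub in auto)
  have g3: "bdim (ssum B C) + bdim (B \<inter> C) = bdim B + bdim C" by (rule grassmann) (use fA sA in auto)
  have BCA: "ssum B C \<subseteq> A" unfolding A_def B_def C_def
    by (rule ssum_sub) (use sub subsp_Int QP LL in auto)
  have le: "bdim (ssum B C) \<le> bdim A"
    by (rule dim_mono[OF BCA fA(1) subsp_ssum[OF sA(2,3)] sA(1)])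
  show ?thesis using g1 g2 g3 le unfolding AQ CQ A_def[symmetric] B_def[symmetric] C_def[symmetric]
    by linarith
qed

lemma col_step:
  assumes fin: "finite P" "finite Lp" and sub: "subsp P" "subsp Q" "subsp Lp" "subsp Lm"
    and QP: "Q \<subseteq> P" and LL: "Lm \<subseteq> Lp"
  shows "(bdim (P \<inter> Lp) - bdim (ssum (Q \<inter> Lp) (P \<inter> Lm))) + bdim (ssum (Q \<inter> Lp) Lm)
         \<le> bdim (ssum (P \<inter> Lp) Lm)"
proof -
  define A where "A = P \<inter> Lp"
  define B where "B = Q \<inter> Lp"
  define C where "C = P \<inter> Lm"
  have fQ: "finite Q" using fin QP finite_subset by blast
  have fL: "finite Lm" using fin LL finite_subset by blast
  have fA: "finite A" "finite B" "finite C" unfolding A_def B_def C_def using fin fQ by auto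
  have sA: "subsp A" "subsp B" "subsp C" unfolding A_def B_def C_def using sub subsp_Int by auto
  have AL: "A \<inter> Lm = C" unfolding A_def C_def using LL by blast
  have BL: "B \<inter> Lm = B \<inter> C" unfolding B_def C_def using QP LL by blast
  have g1: "bdim (ssum A Lm) + bdim (A \<inter> Lm) = bdim A + bdim Lm" by (rule grassmann) (use fA fL sA sub in auto)
  have g2: "bdim (ssum B Lm) + bdim (B \<inter> Lm) = bdim B + bdim Lm" by (rule grassmann) (use fA fL sA sub in auto)
  have g3: "bdim (ssum B C) + bdim (B \<inter> C) = bdim B + bdim C" by (rule grassmann) (use fA sA in auto)
  have BCA: "ssum B C \<subseteq> A" unfolding A_def B_def C_def
    by (rule ssum_sub) (use sub subsp_Int QP LL in auto)
  have le: "bdim (ssum B C) \<le> bdim A"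
    by (rule dim_mono[OF BCA fA(1) subsp_ssum[OF sA(2,3)] sA(1)])
  show ?thesis using g1 g2 g3 le unfolding AL BL A_def[symmetric] B_def[symmetric] C_def[symmetric]
    by linarith
qed

lemma block_M0_eq:
  "block_M0 X dX Z dZ f a b =
     bdim (push0 X f ` ker_plus X dX a \<inter> ker_plus Z dZ b)
     - bdim (ssum (push0 X f ` ker_minus X dX a \<inter> ker_plus Z dZ b) (push0 X f ` ker_plus X dX a \<inter> ker_minus Z dZ b))"
  unfolding block_M0_def quot_dim_def ssum_def ..

lemma row_bound:
  assumes fmX: "finite_metric_space X dX" and fmZ: "finite_metric_space Z dZ"
    and aS: "a \<in> bar_set X dX"
  shows "(\<Sum>b\<in>bar_set Z dZ. block_M0 X dX Z dZ f a b) \<le> bar_mult X dX a"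
proof -
  have a0: "0 < a" using aS unfolding bar_set_def by simp
  define F where "F = push0 X f"
  define P where "P = F ` ker_plus X dX a"
  define Q where "Q = F ` ker_minus X dX a"
  have fX: "finite X" by (rule fm_fin[OF fmX])
  have fZ: "finite Z" by (rule fm_fin[OF fmZ])
  have addF: "additive F" unfolding F_def by (rule push0_additive)
  have fP: "finite P" unfolding P_def using finite_ker_plus[OF fX] by simp
  have fQ: "finite Q" unfolding Q_def using finite_ker_minus[OF fmX a0] by simp
  have sP: "subsp P" unfolding P_def by (rule subsp_image[OF addF subsp_ker_plus])
  have sQ: "subsp Q" unfolding Q_def by (rule subsp_image[OF addF subsp_ker_minus[OF fmX a0]])
  have QP: "Q \<subseteq> P" unfolding P_def Q_def using ker_minus_sub[OF fmX a0] by (rule image_mono)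
  have Lfacts: "finite (ker_plus Z dZ b) \<and> finite (ker_minus Z dZ b) \<and> subsp (ker_plus Z dZ b)
      \<and> subsp (ker_minus Z dZ b) \<and> ker_minus Z dZ b \<subseteq> ker_plus Z dZ b" if "0 < b" for b
    using finite_ker_plus[OF fZ] finite_ker_minus[OF fmZ that] subsp_ker_plus
      subsp_ker_minus[OF fmZ that] ker_minus_sub[OF fmZ that] by blast
  define h where "h b = bdim (ssum (P \<inter> ker_plus Z dZ b) Q)" for b
  define h' where "h' b = bdim (ssum (P \<inter> ker_minus Z dZ b) Q)" for b
  have "(\<Sum>b\<in>bar_set Z dZ. block_M0 X dX Z dZ f a b) + bdim Q \<le> bdim P"
  proof (rule telescope[where h = h and h' = h'])
    show "finite (bar_set Z dZ)" by (rule finite_bar_set[OF fmZ])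
  next
    fix b assume "b \<in> bar_set Z dZ"
    then have b0: "0 < b" unfolding bar_set_def by simp
    note L = Lfacts[OF b0]
    show "block_M0 X dX Z dZ f a b + h' b \<le> h b"
      unfolding block_M0_eq h_def h'_def F_def[symmetric] P_def[symmetric] Q_def[symmetric]
      by (rule row_step) (use fP sP sQ QP L in auto)
    have s1: "subsp (P \<inter> ker_minus Z dZ b)" using sP L subsp_Int by blast
    have f1: "finite (ssum (P \<inter> ker_minus Z dZ b) Q)" using fP fQ by (intro finite_ssum) auto
    show "bdim Q \<le> h' b" unfolding h'_def
      by (rule dim_mono[OF ssum_sup2[OF s1] f1 sQ subsp_ssum[OF s1 sQ]])
    have s2: "subsp (P \<inter> ker_plus Z dZ b)" using sP L subsp_Int by blast
    have "ssum (P \<inter> ker_plus Z dZ b) Q \<subseteq> P" by (rule ssum_sub[OF sP]) (use QP in auto)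
    then show "h b \<le> bdim P" unfolding h_def
      by (rule dim_mono[OF _ fP subsp_ssum[OF s2 sQ] sP])
  next
    fix b1 b2 assume b: "b1 \<in> bar_set Z dZ" "b2 \<in> bar_set Z dZ" "b1 < b2"
    then have b0: "0 < b1" "0 < b2" unfolding bar_set_def by auto
    have s1: "subsp (P \<inter> ker_minus Z dZ b2)" using sP Lfacts[OF b0(2)] subsp_Int by blast
    have s2: "subsp (P \<inter> ker_plus Z dZ b1)" using sP Lfacts[OF b0(1)] subsp_Int by blast
    have f1: "finite (ssum (P \<inter> ker_minus Z dZ b2) Q)" using fP fQ by (intro finite_ssum) auto
    have "ker_plus Z dZ b1 \<subseteq> ker_minus Z dZ b2" using b0 b by (intro ker_plus_sub_minus[OF fmZ]) auto
    then have "ssum (P \<inter> ker_plus Z dZ b1) Q \<subseteq> ssum (P \<inter> ker_minus Z dZ b2) Q"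
      by (intro ssum_mono) auto
    then show "h b1 \<le> h' b2" unfolding h_def h'_def
      by (rule dim_mono[OF _ f1 subsp_ssum[OF s2 sQ] subsp_ssum[OF s1 sQ]])
  next
    show "bdim Q \<le> bdim P" by (rule dim_mono[OF QP fP sQ sP])
  qed
  moreover have "bdim P + bdim (ker_minus X dX a) \<le> bdim Q + bdim (ker_plus X dX a)"
    unfolding P_def Q_def
    by (rule image_dim[OF addF finite_ker_plus[OF fX] subsp_ker_plus subsp_ker_minus[OF fmX a0] ker_minus_sub[OF fmX a0]])
  ultimately show ?thesis unfolding bar_mult_eq[OF a0] by linarith
qed

lemma col_bound:
  assumes fmX: "finite_metric_space X dX" and fmZ: "finite_metric_space Z dZ"
    and bS: "b \<in> bar_set Z dZ"
  shows "(\<Sum>a\<in>bar_set X dX. block_M0 X dX Z dZ f a b) \<le> bar_mult Z dZ b"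
proof -
  have b0: "0 < b" using bS unfolding bar_set_def by simp
  define F where "F = push0 X f"
  define Lp where "Lp = ker_plus Z dZ b"
  define Lm where "Lm = ker_minus Z dZ b"
  have fX: "finite X" by (rule fm_fin[OF fmX])
  have fZ: "finite Z" by (rule fm_fin[OF fmZ])
  have addF: "additive F" unfolding F_def by (rule push0_additive)
  have fLp: "finite Lp" unfolding Lp_def by (rule finite_ker_plus[OF fZ])
  have fLm: "finite Lm" unfolding Lm_def by (rule finite_ker_minus[OF fmZ b0])
  have sLp: "subsp Lp" unfolding Lp_def by (rule subsp_ker_plus)
  have sLm: "subsp Lm" unfolding Lm_def by (rule subsp_ker_minus[OF fmZ b0])
  have LL: "Lm \<subseteq> Lp" unfolding Lm_def Lp_def by (rule ker_minus_sub[OF fmZ b0])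
  have Pfacts: "finite (F ` ker_plus X dX a) \<and> finite (F ` ker_minus X dX a) \<and> subsp (F ` ker_plus X dX a)
      \<and> subsp (F ` ker_minus X dX a) \<and> F ` ker_minus X dX a \<subseteq> F ` ker_plus X dX a" if "0 < a" for a
    using finite_imageI[OF finite_ker_plus[OF fX]] finite_imageI[OF finite_ker_minus[OF fmX that]]
      subsp_image[OF addF subsp_ker_plus] subsp_image[OF addF subsp_ker_minus[OF fmX that]]
      image_mono[OF ker_minus_sub[OF fmX that]] by (intro conjI)
  define h where "h a = bdim (ssum (F ` ker_plus X dX a \<inter> Lp) Lm)" for a
  define h' where "h' a = bdim (ssum (F ` ker_minus X dX a \<inter> Lp) Lm)" for a
  have "(\<Sum>a\<in>bar_set X dX. block_M0 X dX Z dZ f a b) + bdim Lm \<le> bdim Lp"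
  proof (rule telescope[where h = h and h' = h'])
    show "finite (bar_set X dX)" by (rule finite_bar_set[OF fmX])
  next
    fix a assume "a \<in> bar_set X dX"
    then have a0: "0 < a" unfolding bar_set_def by simp
    note P = Pfacts[OF a0]
    show "block_M0 X dX Z dZ f a b + h' a \<le> h a"
      unfolding block_M0_eq h_def h'_def F_def[symmetric] Lp_def[symmetric] Lm_def[symmetric]
      by (rule col_step) (use fLp sLp sLm LL P in auto)
    have s1: "subsp (F ` ker_minus X dX a \<inter> Lp)" using sLp P subsp_Int by blast
    have f1: "finite (ssum (F ` ker_minus X dX a \<inter> Lp) Lm)" using fLp fLm by (intro finite_ssum) auto
    show "bdim Lm \<le> h' a" unfolding h'_def
      by (rule dim_mono[OF ssum_sup2[OF s1] f1 sLm subsp_ssum[OF s1 sLm]])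
    have s2: "subsp (F ` ker_plus X dX a \<inter> Lp)" using sLp P subsp_Int by blast
    have "ssum (F ` ker_plus X dX a \<inter> Lp) Lm \<subseteq> Lp" by (rule ssum_sub[OF sLp]) (use LL in auto)
    then show "h a \<le> bdim Lp" unfolding h_def
      by (rule dim_mono[OF _ fLp subsp_ssum[OF s2 sLm] sLp])
  next
    fix a1 a2 assume a: "a1 \<in> bar_set X dX" "a2 \<in> bar_set X dX" "a1 < a2"
    then have a0: "0 < a1" "0 < a2" unfolding bar_set_def by auto
    have s1: "subsp (F ` ker_minus X dX a2 \<inter> Lp)" using sLp Pfacts[OF a0(2)] subsp_Int by blast
    have s2: "subsp (F ` ker_plus X dX a1 \<inter> Lp)" using sLp Pfacts[OF a0(1)] subsp_Int by blast
    have f1: "finite (ssum (F ` ker_minus X dX a2 \<inter> Lp) Lm)" using fLp fLm by (intro finite_ssum) auto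
    have "ker_plus X dX a1 \<subseteq> ker_minus X dX a2" using a0 a by (intro ker_plus_sub_minus[OF fmX]) auto
    then have "F ` ker_plus X dX a1 \<subseteq> F ` ker_minus X dX a2" by (rule image_mono)
    then have "ssum (F ` ker_plus X dX a1 \<inter> Lp) Lm \<subseteq> ssum (F ` ker_minus X dX a2 \<inter> Lp) Lm"
      by (intro ssum_mono) auto
    then show "h a1 \<le> h' a2" unfolding h_def h'_def
      by (rule dim_mono[OF _ f1 subsp_ssum[OF s2 sLm] subsp_ssum[OF s1 sLm]])
  next
    show "bdim Lm \<le> bdim Lp" by (rule dim_mono[OF LL fLp sLm sLp])
  qed
  then show ?thesis unfolding bar_mult_eq[OF b0] Lp_def Lm_def by linarith
qed

lemma block_zero:
  assumes fmX: "finite_metric_space X dX" and fmZ: "finite_metric_space Z dZ"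
    and a0: "0 < a" and b0: "0 < b" and out: "a \<notin> bar_set X dX \<or> b \<notin> bar_set Z dZ"
  shows "block_M0 X dX Z dZ f a b = 0"
proof -
  define F where "F = push0 X f"
  have fX: "finite X" by (rule fm_fin[OF fmX])
  have fZ: "finite Z" by (rule fm_fin[OF fmZ])
  have addF: "additive F" unfolding F_def by (rule push0_additive)
  define A where "A = F ` ker_plus X dX a \<inter> ker_plus Z dZ b"
  define B where "B = F ` ker_minus X dX a \<inter> ker_plus Z dZ b"
  define C where "C = F ` ker_plus X dX a \<inter> ker_minus Z dZ b"
  have fA: "finite A" unfolding A_def using finite_ker_plus[OF fZ] by simp
  have sA: "subsp A" "subsp B" "subsp C" unfolding A_def B_def C_def
    using subsp_Int subsp_image[OF addF subsp_ker_plus] subsp_image[OF addF subsp_ker_minus[OF fmX a0]]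
      subsp_ker_plus subsp_ker_minus[OF fmZ b0] by blast+
  have fB: "finite B" unfolding B_def using finite_ker_plus[OF fZ] by simp
  have fC: "finite C" unfolding C_def using finite_ker_minus[OF fmZ b0] by simp
  have "A \<subseteq> ssum B C"
  proof (cases "a \<notin> bar_set X dX")
    case True
    then have "bar_mult X dX a = 0" using a0 unfolding bar_set_def by simp
    then have "ker_minus X dX a = ker_plus X dX a" by (rule bar_mult_zero_eq[OF fmX a0])
    then have "B = A" unfolding A_def B_def by simp
    then show ?thesis using ssum_sup1[OF sA(3)] by simp
  next
    case False
    then have "b \<notin> bar_set Z dZ" using out by simp
    then have "bar_mult Z dZ b = 0" using b0 unfolding bar_set_def by simp
    then have "ker_minus Z dZ b = ker_plus Z dZ b" by (rule bar_mult_zero_eq[OF fmZ b0])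
    then have "C = A" unfolding A_def C_def by simp
    then show ?thesis using ssum_sup2[OF sA(2)] by simp
  qed
  then have "bdim A \<le> bdim (ssum B C)"
    by (rule dim_mono[OF _ finite_ssum[OF fB fC] sA(1) subsp_ssum[OF sA(2,3)]])
  then show ?thesis unfolding block_M0_eq F_def[symmetric] A_def[symmetric] B_def[symmetric] C_def[symmetric]
    by simp
qed

lemma off_step:
  fixes T :: "real set" and N :: "real \<Rightarrow> nat"
  assumes "finite T" "b1 \<in> T" "b2 \<in> T" "b1 < b2"
  shows "(\<Sum>b'\<in>{b'\<in>T. b' < b1}. N b') + N b1 \<le> (\<Sum>b'\<in>{b'\<in>T. b' < b2}. N b')"
proof -
  have "(\<Sum>b'\<in>{b'\<in>T. b' < b1}. N b') + N b1 = (\<Sum>b'\<in>insert b1 {b'\<in>T. b' < b1}. N b')"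
    using assms(1) by simp
  also have "\<dots> \<le> (\<Sum>b'\<in>{b'\<in>T. b' < b2}. N b')"
    using assms by (intro sum_mono2) auto
  finally show ?thesis .
qed

lemma off_top:
  fixes T :: "real set" and N :: "real \<Rightarrow> nat"
  assumes "finite T" "b \<in> T"
  shows "(\<Sum>b'\<in>{b'\<in>T. b' < b}. N b') + N b \<le> (\<Sum>b'\<in>T. N b')"
proof -
  have "(\<Sum>b'\<in>{b'\<in>T. b' < b}. N b') + N b = (\<Sum>b'\<in>insert b {b'\<in>T. b' < b}. N b')"
    using assms(1) by simp
  also have "\<dots> \<le> (\<Sum>b'\<in>T. N b')"
    using assms by (intro sum_mono2) auto
  finally show ?thesis .
qed

lemma off_unique:
  fixes T :: "real set" and N :: "real \<Rightarrow> nat"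
  assumes "finite T" "b1 \<in> T" "b2 \<in> T" "1 \<le> k1" "k1 \<le> N b1" "1 \<le> k2" "k2 \<le> N b2"
    and eq: "(\<Sum>b'\<in>{b'\<in>T. b' < b1}. N b') + k1 = (\<Sum>b'\<in>{b'\<in>T. b' < b2}. N b') + k2"
  shows "b1 = b2"
proof (rule ccontr)
  assume "b1 \<noteq> b2"
  then consider "b1 < b2" | "b2 < b1" by linarith
  then show False
  proof cases
    case 1
    from off_step[OF assms(1-3) 1, of N] show False using eq assms(4-7) by linarith
  next
    case 2
    from off_step[OF assms(1) assms(3) assms(2) 2, of N] show False using eq assms(4-7) by linarith
  qed
qed

lemma matching_exists:
  fixes S T :: "real set" and m m' :: "real \<Rightarrow> nat" and M :: "real \<Rightarrow> real \<Rightarrow> nat"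
  assumes fS: "finite S" and fT: "finite T"
    and row: "\<And>a. a \<in> S \<Longrightarrow> (\<Sum>b\<in>T. M a b) \<le> m a"
    and col: "\<And>b. b \<in> T \<Longrightarrow> (\<Sum>a\<in>S. M a b) \<le> m' b"
  shows "\<exists>\<sigma>. partial_matching \<sigma> (Rep S m) (Rep T m')
    \<and> (\<forall>a b. card {(p, q) \<in> \<sigma>. fst p = a \<and> fst q = b} = (if a \<in> S \<and> b \<in> T then M a b else 0))"
proof -
  define offR where "offR a b = (\<Sum>b'\<in>{b'\<in>T. b' < b}. M a b')" for a b
  define offC where "offC a b = (\<Sum>a'\<in>{a'\<in>S. a' < a}. M a' b)" for a b
  define pr where "pr a b k = ((a, offR a b + k), (b, offC a b + k))" for a b k
  define \<sigma> where "\<sigma> = (\<Union>a\<in>S. \<Union>b\<in>T. pr a b ` {1..M a b})"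
  have mem: "x \<in> \<sigma> \<longleftrightarrow> (\<exists>a b k. a \<in> S \<and> b \<in> T \<and> 1 \<le> k \<and> k \<le> M a b \<and> x = pr a b k)" for x
  proof
    assume "x \<in> \<sigma>"
    then obtain a b where ab: "a \<in> S" "b \<in> T" "x \<in> pr a b ` {1..M a b}" unfolding \<sigma>_def by blast
    then obtain k where "k \<in> {1..M a b}" "x = pr a b k" by blast
    then show "\<exists>a b k. a \<in> S \<and> b \<in> T \<and> 1 \<le> k \<and> k \<le> M a b \<and> x = pr a b k" using ab by auto
  next
    assume "\<exists>a b k. a \<in> S \<and> b \<in> T \<and> 1 \<le> k \<and> k \<le> M a b \<and> x = pr a b k"
    then obtain a b k where ab: "a \<in> S" "b \<in> T" "1 \<le> k" "k \<le> M a b" "x = pr a b k" by blast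
    then have "x \<in> pr a b ` {1..M a b}" by simp
    then show "x \<in> \<sigma>" unfolding \<sigma>_def using ab(1,2) by blast
  qed
  have "partial_matching \<sigma> (Rep S m) (Rep T m')"
    unfolding partial_matching_def
  proof (intro conjI allI impI)
    show "\<sigma> \<subseteq> Rep S m \<times> Rep T m'"
    proof
      fix x assume "x \<in> \<sigma>"
      then obtain a b k where abk: "a \<in> S" "b \<in> T" "1 \<le> k" "k \<le> M a b" "x = pr a b k"
        using mem by blast
      have r: "offR a b + M a b \<le> m a"
        using off_top[OF fT abk(2), of "M a"] row[OF abk(1)] unfolding offR_def by linarith
      have c: "offC a b + M a b \<le> m' b"
        using off_top[OF fS abk(1), of "\<lambda>a. M a b"] col[OF abk(2)] unfolding offC_def by linarith
      show "x \<in> Rep S m \<times> Rep T m'"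
        unfolding abk(5) pr_def Rep_def using abk r c by auto
    qed
  next
    fix p q q' assume h: "(p, q) \<in> \<sigma> \<and> (p, q') \<in> \<sigma>"
    then obtain a1 b1 k1 a2 b2 k2 where
      1: "a1 \<in> S" "b1 \<in> T" "1 \<le> k1" "k1 \<le> M a1 b1" "(p, q) = pr a1 b1 k1" and
      2: "a2 \<in> S" "b2 \<in> T" "1 \<le> k2" "k2 \<le> M a2 b2" "(p, q') = pr a2 b2 k2"
      using mem by meson
    have pa1: "p = (a1, offR a1 b1 + k1)" using arg_cong[OF 1(5), of fst] unfolding pr_def by simp
    have pa2: "p = (a2, offR a2 b2 + k2)" using arg_cong[OF 2(5), of fst] unfolding pr_def by simp
    note pa = pa1 pa2
    then have a: "a1 = a2" by simp
    have "offR a1 b1 + k1 = offR a1 b2 + k2" using pa a by simp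
    then have b: "b1 = b2" unfolding offR_def
      by (rule off_unique[where N = "M a1", OF fT 1(2) 2(2) 1(3) 1(4) 2(3), rotated]) (use 2(4) a in simp)
    then have "k1 = k2" using \<open>offR a1 b1 + k1 = offR a1 b2 + k2\<close> by simp
    then show "q = q'" using 1(5) 2(5) a b unfolding pr_def by simp
  next
    fix p p' q assume h: "(p, q) \<in> \<sigma> \<and> (p', q) \<in> \<sigma>"
    then obtain a1 b1 k1 a2 b2 k2 where
      1: "a1 \<in> S" "b1 \<in> T" "1 \<le> k1" "k1 \<le> M a1 b1" "(p, q) = pr a1 b1 k1" and
      2: "a2 \<in> S" "b2 \<in> T" "1 \<le> k2" "k2 \<le> M a2 b2" "(p', q) = pr a2 b2 k2"
      using mem by meson
    have qb1: "q = (b1, offC a1 b1 + k1)" using arg_cong[OF 1(5), of snd] unfolding pr_def by simp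
    have qb2: "q = (b2, offC a2 b2 + k2)" using arg_cong[OF 2(5), of snd] unfolding pr_def by simp
    note qb = qb1 qb2
    then have b: "b1 = b2" by simp
    have "offC a1 b1 + k1 = offC a2 b1 + k2" using qb b by simp
    then have a: "a1 = a2" unfolding offC_def
      by (rule off_unique[where N = "\<lambda>a. M a b1", OF fS 1(1) 2(1) 1(3) 1(4) 2(3), rotated]) (use 2(4) b in simp)
    then have "k1 = k2" using \<open>offC a1 b1 + k1 = offC a2 b1 + k2\<close> by simp
    then show "p = p'" using 1(5) 2(5) a b unfolding pr_def by simp
  qed
  moreover have "card {(p, q) \<in> \<sigma>. fst p = a \<and> fst q = b} = (if a \<in> S \<and> b \<in> T then M a b else 0)" for a b
  proof -
    have E: "{(p, q) \<in> \<sigma>. fst p = a \<and> fst q = b} = (if a \<in> S \<and> b \<in> T then pr a b ` {1..M a b} else {})"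
    proof (intro set_eqI iffI)
      fix x assume "x \<in> {(p, q) \<in> \<sigma>. fst p = a \<and> fst q = b}"
      then have x: "x \<in> \<sigma>" "fst (fst x) = a" "fst (snd x) = b" by auto
      then obtain a' b' k where abk: "a' \<in> S" "b' \<in> T" "1 \<le> k" "k \<le> M a' b'" "x = pr a' b' k"
        using mem by blast
      have "a' = a" "b' = b" using x(2,3) abk(5) unfolding pr_def by auto
      then show "x \<in> (if a \<in> S \<and> b \<in> T then pr a b ` {1..M a b} else {})" using abk by auto
    next
      fix x assume "x \<in> (if a \<in> S \<and> b \<in> T then pr a b ` {1..M a b} else {})"
      then have "a \<in> S" "b \<in> T" "x \<in> pr a b ` {1..M a b}" by (auto split: if_splits)
      then obtain k where k: "1 \<le> k" "k \<le> M a b" "x = pr a b k" by auto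
      then have "x \<in> \<sigma>" using mem \<open>a \<in> S\<close> \<open>b \<in> T\<close> by blast
      then show "x \<in> {(p, q) \<in> \<sigma>. fst p = a \<and> fst q = b}" using k(3) unfolding pr_def by auto
    qed
    have inj: "inj_on (pr a b) {1..M a b}" unfolding pr_def by (rule inj_onI) simp
    show ?thesis unfolding E using card_image[OF inj] by simp
  qed
  ultimately show ?thesis by blast
qed

theorem lemma4p2:
  fixes X :: "'a set" and dX :: "'a \<Rightarrow> 'a \<Rightarrow> real"
    and Z :: "'b set" and dZ :: "'b \<Rightarrow> 'b \<Rightarrow> real"
    and f :: "'a \<Rightarrow> 'b"
  assumes "finite_metric_space X dX" and "finite_metric_space Z dZ"
    and "non_expansive X dX Z dZ f"
  shows "(\<forall>a\<in>bar_set X dX. (\<Sum>b\<in>bar_set Z dZ. block_M0 X dX Z dZ f a b) \<le> bar_mult X dX a)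
       \<and> (\<forall>b\<in>bar_set Z dZ. (\<Sum>a\<in>bar_set X dX. block_M0 X dX Z dZ f a b) \<le> bar_mult Z dZ b)
       \<and> (\<exists>\<sigma>. partial_matching \<sigma> (Rep (bar_set X dX) (bar_mult X dX)) (Rep (bar_set Z dZ) (bar_mult Z dZ))
              \<and> (\<forall>a>0. \<forall>b>0. card {(p, q) \<in> \<sigma>. fst p = a \<and> fst q = b} = block_M0 X dX Z dZ f a b))"
proof (intro conjI)
  show R: "\<forall>a\<in>bar_set X dX. (\<Sum>b\<in>bar_set Z dZ. block_M0 X dX Z dZ f a b) \<le> bar_mult X dX a"
    using row_bound[OF assms(1,2)] by blast
  show C: "\<forall>b\<in>bar_set Z dZ. (\<Sum>a\<in>bar_set X dX. block_M0 X dX Z dZ f a b) \<le> bar_mult Z dZ b"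
    using col_bound[OF assms(1,2)] by blast
  obtain \<sigma> where \<sigma>: "partial_matching \<sigma> (Rep (bar_set X dX) (bar_mult X dX)) (Rep (bar_set Z dZ) (bar_mult Z dZ))"
    and c: "\<And>a b. card {(p, q) \<in> \<sigma>. fst p = a \<and> fst q = b}
       = (if a \<in> bar_set X dX \<and> b \<in> bar_set Z dZ then block_M0 X dX Z dZ f a b else 0)"
    using matching_exists[OF finite_bar_set[OF assms(1)] finite_bar_set[OF assms(2)],
        of "block_M0 X dX Z dZ f" "bar_mult X dX" "bar_mult Z dZ"] R C by blast
  have "\<forall>a>0. \<forall>b>0. card {(p, q) \<in> \<sigma>. fst p = a \<and> fst q = b} = block_M0 X dX Z dZ f a b"
  proof (intro allI impI)
    fix a b :: real assume a0: "0 < a" and b0: "0 < b"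
    show "card {(p, q) \<in> \<sigma>. fst p = a \<and> fst q = b} = block_M0 X dX Z dZ f a b"
    proof (cases "a \<in> bar_set X dX \<and> b \<in> bar_set Z dZ")
      case True then show ?thesis using c[of a b] by simp
    next
      case False
      then have "block_M0 X dX Z dZ f a b = 0" using block_zero[OF assms(1,2) a0 b0] by blast
      then show ?thesis using c[of a b] False by simp
    qed
  qed
  with \<sigma> show "\<exists>\<sigma>. partial_matching \<sigma> (Rep (bar_set X dX) (bar_mult X dX)) (Rep (bar_set Z dZ) (bar_mult Z dZ))
              \<and> (\<forall>a>0. \<forall>b>0. card {(p, q) \<in> \<sigma>. fst p = a \<and> fst q = b} = block_M0 X dX Z dZ f a b)"
    by blast
qed

end
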